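(* Let $S$ be a finite, additively commutative, congruence-simple semiring. Then either $(S,+)$ is a group (hence $(S,+,\cdot)$ is a ring), or $S$ has an additively absorbing element, i.e. an element $\alpha$ with $\alpha+x=x+\alpha=\alpha$ for all $x\in S$.
   Context: A semiring is a nonempty set $S$ with two associative binary operations $+$ and $\cdot$ satisfying both distributive laws $a(b+c)=ab+ac$ and $(a+b)c=ac+bc$; no identity elements are assumed. It is additively commutative if $(S,+)$ is commutative. A congruence relation on $S$ is an equivalence relation $\sim$ such that $x_1\sim x_2$ implies $c+x_1\sim c+x_2$, $x_1+c\sim x_2+c$, $cx_1\sim cx_2$, $x_1c\sim x_2c$ for all $c\in S$. $S$ is congruence-simple if its only congruence relations are the identity relation and $S\times S$. *)

theory Defs
  imports Main
begin

(* An additively commutative semiring without identities is exactly an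
   instance of the HOL type class 'semiring' (ab_semigroup_add + semigroup_mult
   + both distributive laws). *)

definition semiring_congruence :: "('a::semiring \<times> 'a) set \<Rightarrow> bool" where
  "semiring_congruence R \<longleftrightarrow> equiv UNIV R \<and>
     (\<forall>x1 x2 c. (x1, x2) \<in> R \<longrightarrow>
        (c + x1, c + x2) \<in> R \<and> (x1 + c, x2 + c) \<in> R \<and>
        (c * x1, c * x2) \<in> R \<and> (x1 * c, x2 * c) \<in> R)"

definition congruence_simple :: "'a::semiring itself \<Rightarrow> bool" where
  "congruence_simple _ \<longleftrightarrow>
     (\<forall>R::('a \<times> 'a) set. semiring_congruence R \<longrightarrow> R = Id \<or> R = UNIV)"

definition additive_group :: "'a::semiring itself \<Rightarrow> bool" where
  "additive_group _ \<longleftrightarrow>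
     (\<exists>z::'a. (\<forall>x. z + x = x \<and> x + z = x) \<and> (\<forall>x. \<exists>y. x + y = z \<and> y + x = z))"

end

theory Submission
  imports Defs
begin

lemma cong_R: "semiring_congruence {(x::'a::semiring, y). \<exists>z. x + z = y + z}"
  unfolding semiring_congruence_def
proof (intro conjI allI impI)
  show "equiv UNIV {(x::'a, y). \<exists>z. x + z = y + z}"
  proof (rule equivI)
    show "refl {(x::'a, y). \<exists>z. x + z = y + z}" by (auto simp: refl_on_def)
    show "sym {(x::'a, y). \<exists>z. x + z = y + z}" by (auto simp: sym_def intro: sym[of "_ + _"])
    show "trans {(x::'a, y). \<exists>z. x + z = y + z}"
    proof (rule transI)
      fix x y u :: 'a
      assume "(x, y) \<in> {(x, y). \<exists>z. x + z = y + z}" "(y, u) \<in> {(x, y). \<exists>z. x + z = y + z}"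
      then obtain z z' where a: "x + z = y + z" and b: "y + z' = u + z'" by auto
      have "x + (z + z') = (x + z) + z'" by (simp add: add.assoc)
      also have "\<dots> = (y + z) + z'" using a by simp
      also have "\<dots> = (y + z') + z" by (simp add: add_ac)
      also have "\<dots> = (u + z') + z" using b by simp
      also have "\<dots> = u + (z + z')" by (simp add: add_ac)
      finally show "(x, u) \<in> {(x, y). \<exists>z. x + z = y + z}" by auto
    qed
  qed auto
next
  fix x1 x2 c :: 'a
  assume "(x1, x2) \<in> {(x, y). \<exists>z. x + z = y + z}"
  then obtain z where a: "x1 + z = x2 + z" by auto
  have "c + x1 + z = c + x2 + z" using a by (simp add: add.assoc)
  then show "(c + x1, c + x2) \<in> {(x, y). \<exists>z. x + z = y + z}" by auto
  have "x1 + c + z = x2 + c + z" using a by (metis add.assoc add.commute[of c z])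
  then show "(x1 + c, x2 + c) \<in> {(x, y). \<exists>z. x + z = y + z}" by auto
  have "c * x1 + c * z = c * x2 + c * z" using a by (metis distrib_left)
  then show "(c * x1, c * x2) \<in> {(x, y). \<exists>z. x + z = y + z}" by auto
  have "x1 * c + z * c = x2 * c + z * c" using a by (metis distrib_right)
  then show "(x1 * c, x2 * c) \<in> {(x, y). \<exists>z. x + z = y + z}" by auto
qed

lemma common_witness:
  fixes A :: "('a::semiring \<times> 'a) set"
  assumes "finite A" "\<forall>(x,y)\<in>A. \<exists>z. x + z = y + z"
  shows "\<exists>z. \<forall>(x,y)\<in>A. x + z = y + z"
  using assms
proof (induction A rule: finite_induct)
  case empty then show ?case by auto
next
  case (insert p A)
  then obtain z where z: "\<forall>(x,y)\<in>A. x + z = y + z" by auto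
  obtain x y where p: "p = (x, y)" by (cases p)
  with insert obtain z' where z': "x + z' = y + z'" by auto
  have "\<forall>(u,v)\<in>insert p A. u + (z + z') = v + (z + z')"
  proof
    fix q assume "q \<in> insert p A"
    then show "case q of (u,v) \<Rightarrow> u + (z + z') = v + (z + z')"
    proof
      assume "q = p" then show ?thesis using p z' by (simp add: add.assoc[symmetric]) (metis add.assoc add.commute[of z])
    next
      assume "q \<in> A" then show ?thesis using z by (auto simp: add.assoc[symmetric])
    qed
  qed
  then show ?case by blast
qed

theorem lemma2p2:
  assumes "congruence_simple TYPE('a::{semiring, finite})"
  shows "additive_group TYPE('a) \<or> (\<exists>\<alpha>::'a. \<forall>x. \<alpha> + x = \<alpha> \<and> x + \<alpha> = \<alpha>)"
proof -
  let ?R = "{(x::'a, y). \<exists>z. x + z = y + z}"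
  have "?R = Id \<or> ?R = UNIV" using assms cong_R unfolding congruence_simple_def by blast
  then show ?thesis
  proof
    assume Rid: "?R = Id"
    have canc: "x + z = y + z \<Longrightarrow> x = y" for x y z :: 'a
    proof -
      assume "x + z = y + z"
      then have "(x, y) \<in> ?R" by auto
      then show "x = y" using Rid by auto
    qed
    obtain a :: 'a where True by auto
    have inj: "inj ((+) a)" by (rule injI) (metis canc add.commute)
    then have surj: "surj ((+) a)" using finite_UNIV finite_UNIV_inj_surj by blast
    obtain e where e: "a + e = a" using surj by (metis surjD)
    have neut: "e + x = x" for x
    proof -
      have "(e + x) + a = x + (a + e)" by (simp add: add_ac)
      also have "\<dots> = x + a" using e by simp
      finally show ?thesis by (rule canc)
    qed
    have "\<forall>x. \<exists>y. x + y = e \<and> y + x = e"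
    proof
      fix x :: 'a
      have "inj ((+) x)" by (rule injI) (metis canc add.commute)
      then have "surj ((+) x)" using finite_UNIV finite_UNIV_inj_surj by blast
      then obtain y where "x + y = e" by (metis surjD)
      then show "\<exists>y. x + y = e \<and> y + x = e" by (metis add.commute)
    qed
    then have "additive_group TYPE('a)" unfolding additive_group_def
      using neut by (metis add.commute)
    then show ?thesis by blast
  next
    assume Ru: "?R = UNIV"
    have mem: "(a, b) \<in> ?R" for a b using Ru by simp
    have "\<exists>z. \<forall>(x,y)\<in>(UNIV::('a\<times>'a) set). x + z = y + z"
      by (rule common_witness) (use mem in auto)
    then obtain z :: 'a where z: "\<And>x y. x + z = y + z" by auto
    have "(z + z) + x = z + z \<and> x + (z + z) = z + z" for x
    proof -
      have "(z + z) + x = (z + x) + z" by (simp add: add_ac)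
      also have "\<dots> = z + z" by (rule z)
      finally show ?thesis by (simp add: add.commute)
    qed
    then show ?thesis by blast
  qed
qed

end
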